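(* Let $K$ be a field containing a primitive $n$-th root of unity $\zeta$ with $\zeta^2\ne1$, let $0\ne x\in K$, let $L\supseteq K$ be a field, and let $\mathcal J_x=\mathcal J_x(1)$. For $b,c\in L$ with $bc=x$ let $\mathtt P(b,c)=L\boldsymbol u$ be the one-dimensional $\mathcal J_x\otimes_KL$-module with $\underline e_0\boldsymbol u=0$, $\underline e_1\boldsymbol u=b\boldsymbol u$, $\underline e_2\boldsymbol u=c\boldsymbol u$. Then for $b,c,e,f\in L$ with $bc=ef=x$, $$\mathrm{Ext}^1_{\mathcal J_x\otimes L}\big(\mathtt P(b,c),\mathtt P(e,f)\big)\cong\begin{cases}L,& b=\zeta e\text{ and } f=\zeta c,\\ L,& b=\zeta^2e\text{ and } f=\zeta^2c,\\ L,& b=e\text{ and } c=f,\\ 0,&\text{otherwise.}\end{cases}$$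
   Context: $\mathcal J_x(1)$ is the $K$-algebra generated by $\underline e_0,\underline e_1,\underline e_2$ subject to $\underline e_0\underline e_1=\zeta\underline e_1\underline e_0$, $\underline e_2\underline e_0=\zeta\underline e_0\underline e_2$, $\underline e_2\underline e_1-\zeta^2\underline e_1\underline e_2=x\underline e_0+x(1-\zeta^2)$. The relations force $bc=x$ for a one-dimensional module on which $\underline e_0$ acts by zero. $\mathrm{Ext}^1$ is computed over $\mathcal J_x\otimes_KL$ (equivalently as $L$-linear Hochschild cohomology $\mathrm{Der}(\mathcal J_x,\mathrm{Hom}_L(M_1,M_2))/\{\text{inner derivations}\}$). *)

theory Defs
  imports Main
begin

text \<open>K is a subfield of the field L (the type 'a).\<close>
definition is_subfield :: "'a::field set \<Rightarrow> bool" where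
  "is_subfield K \<longleftrightarrow> 0 \<in> K \<and> 1 \<in> K \<and>
     (\<forall>a\<in>K. \<forall>b\<in>K. a + b \<in> K \<and> a * b \<in> K \<and> - a \<in> K \<and> inverse a \<in> K)"

definition primitive_root_of_unity :: "nat \<Rightarrow> 'a::field \<Rightarrow> bool" where
  "primitive_root_of_unity n z \<longleftrightarrow> 0 < n \<and> z ^ n = 1 \<and> (\<forall>k. 0 < k \<and> k < n \<longrightarrow> z ^ k \<noteq> 1)"

text \<open>Generators e_0, e_1, e_2; words = monomials of the free algebra (basis over L).\<close>
datatype gen = E0 | E1 | E2

text \<open>A relator is an element of the free algebra over L, given as a list of (coefficient, word).\<close>
type_synonym 'a relator = "('a \<times> gen list) list"

definition J_relators :: "'a::field \<Rightarrow> 'a \<Rightarrow> 'a relator list" where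
  "J_relators z x =
    [ [(1, [E0, E1]), (- z, [E1, E0])],
      [(1, [E2, E0]), (- z, [E0, E2])],
      [(1, [E2, E1]), (- (z^2), [E1, E2]), (- x, [E0]), (- (x * (1 - z^2)), [])] ]"

text \<open>The action of a word on the one-dimensional module P(b,c) = L u:
  e0 acts by 0, e1 by b, e2 by c.\<close>
fun gen_val :: "'a::field \<Rightarrow> 'a \<Rightarrow> gen \<Rightarrow> 'a" where
  "gen_val b c E0 = 0"
| "gen_val b c E1 = b"
| "gen_val b c E2 = c"

definition P_char :: "'a::field \<Rightarrow> 'a \<Rightarrow> gen list \<Rightarrow> 'a" where
  "P_char b c w = prod_list (map (gen_val b c) w)"

text \<open>L-linear derivations of J_x \<otimes> L into the bimodule Hom_L(M1,M2) = L, where M1, M2 are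
  one-dimensional with characters chi1, chi2: (a.phi) = chi2(a) phi, (phi.a) = phi chi1(a).
  A linear map on the free algebra is given by its values d on words; it is a derivation
  iff Leibniz holds on words; it descends to the quotient J iff it vanishes on the two-sided
  ideal generated by the relators, i.e. on all elements a r b.\<close>
definition derivations ::
  "'a::field relator list \<Rightarrow> (gen list \<Rightarrow> 'a) \<Rightarrow> (gen list \<Rightarrow> 'a) \<Rightarrow> (gen list \<Rightarrow> 'a) set" where
  "derivations rels chi1 chi2 =
     {d. (\<forall>u v. d (u @ v) = chi2 u * d v + d u * chi1 v) \<and>
         (\<forall>r\<in>set rels. \<forall>a b. (\<Sum>(t, w)\<leftarrow>r. t * d (a @ w @ b)) = 0)}"

definition inner_derivations ::
  "(gen list \<Rightarrow> 'a::field) \<Rightarrow> (gen list \<Rightarrow> 'a) \<Rightarrow> (gen list \<Rightarrow> 'a) set" where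
  "inner_derivations chi1 chi2 = {d. \<exists>phi. \<forall>w. d w = (chi2 w - chi1 w) * phi}"

definition quotient_dim :: "(gen list \<Rightarrow> 'a::field) set \<Rightarrow> (gen list \<Rightarrow> 'a) set \<Rightarrow> nat \<Rightarrow> bool" where
  "quotient_dim D I k \<longleftrightarrow> (\<exists>B. length B = k \<and> set B \<subseteq> D \<and>
     (\<forall>cs. length cs = k \<longrightarrow> (\<lambda>w. \<Sum>i<k. cs ! i * (B ! i) w) \<in> I \<longrightarrow> (\<forall>i<k. cs ! i = 0)) \<and>
     (\<forall>d\<in>D. \<exists>cs. length cs = k \<and> (\<lambda>w. d w - (\<Sum>i<k. cs ! i * (B ! i) w)) \<in> I))"

text \<open>dim_L Ext^1_{J_x \<otimes> L}(P(b,c), P(e,f)) = k, computed as Der / Inn.\<close>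
definition Ext1_P_dim :: "'a::field \<Rightarrow> 'a \<Rightarrow> 'a \<Rightarrow> 'a \<Rightarrow> 'a \<Rightarrow> 'a \<Rightarrow> nat \<Rightarrow> bool" where
  "Ext1_P_dim z x b c e f k =
     quotient_dim (derivations (J_relators z x) (P_char b c) (P_char e f))
                  (inner_derivations (P_char b c) (P_char e f)) k"

end

theory Submission
  imports Defs
begin

definition leib :: "'a::field \<Rightarrow> 'a \<Rightarrow> 'a \<Rightarrow> 'a \<Rightarrow> (gen list \<Rightarrow> 'a) \<Rightarrow> bool" where
  "leib b c e f d \<longleftrightarrow> (\<forall>u v. d (u @ v) = P_char e f u * d v + d u * P_char b c v)"

lemma P_char_simps[simp]: "P_char b c [] = 1" "P_char b c (g # w) = gen_val b c g * P_char b c w"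
  "P_char b c (u @ v) = P_char b c u * P_char b c v"
  by (simp_all add: P_char_def)

fun Dt :: "'a::field \<Rightarrow> 'a \<Rightarrow> 'a \<Rightarrow> 'a \<Rightarrow> (gen \<Rightarrow> 'a) \<Rightarrow> gen list \<Rightarrow> 'a" where
  "Dt b c e f t [] = 0"
| "Dt b c e f t (g # w) = gen_val e f g * Dt b c e f t w + t g * P_char b c w"

lemma leib_Dt: "leib b c e f (Dt b c e f t)"
  unfolding leib_def
proof (intro allI)
  fix u v show "Dt b c e f t (u @ v) = P_char e f u * Dt b c e f t v + Dt b c e f t u * P_char b c v"
    by (induction u) (simp_all add: algebra_simps)
qed

lemma Dt_single[simp]: "Dt b c e f t [g] = t g" by simp

lemma leib_nil: assumes "leib b c e f d" shows "d [] = 0"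
proof -
  have "d ([] @ []) = P_char e f [] * d [] + d [] * P_char b c []" using assms unfolding leib_def by blast
  then have "d [] = d [] + d []" by simp
  then show ?thesis by (simp only: add_cancel_right_right)
qed

lemma leib_cons: "leib b c e f d \<Longrightarrow> d (g # w) = gen_val e f g * d w + d [g] * P_char b c w"
  unfolding leib_def by (drule spec[of _ "[g]"], drule spec[of _ w]) simp

lemma leib_unique:
  assumes "leib b c e f d" "leib b c e f d'" "\<And>g. d [g] = d' [g]"
  shows "d = d'"
proof
  fix w show "d w = d' w"
  proof (induction w)
    case Nil show ?case by (simp add: leib_nil[OF assms(1)] leib_nil[OF assms(2)])
  next
    case (Cons g w) show ?case
      by (simp only: leib_cons[OF assms(1), of g w] leib_cons[OF assms(2), of g w] Cons.IH assms(3))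
  qed
qed

lemma leib_lin: "leib b c e f d \<Longrightarrow> leib b c e f d' \<Longrightarrow> leib b c e f (\<lambda>w. d w - k * d' w)"
  unfolding leib_def by (simp add: algebra_simps)

lemma leib_inner: "leib b c e f (\<lambda>w. (P_char e f w - P_char b c w) * phi)"
  unfolding leib_def by (simp add: algebra_simps)

lemma leib_two: "leib b c e f d \<Longrightarrow> d [g, h] = gen_val e f g * d [h] + d [g] * gen_val b c h"
  using leib_cons[of b c e f d g "[h]"] by simp

lemma leib_three: "leib b c e f d \<Longrightarrow> d (a @ w @ bb) =
   P_char e f a * (P_char e f w * d bb + d w * P_char b c bb) + d a * (P_char b c w * P_char b c bb)"
  unfolding leib_def by simp

lemma inner_iff:
  assumes "leib b c e f h"
  shows "h \<in> inner_derivations (P_char b c) (P_char e f) \<longleftrightarrow>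
     (\<exists>phi. h [E0] = 0 \<and> h [E1] = (e - b) * phi \<and> h [E2] = (f - c) * phi)"
proof
  assume "h \<in> inner_derivations (P_char b c) (P_char e f)"
  then obtain phi where "\<forall>w. h w = (P_char e f w - P_char b c w) * phi"
    unfolding inner_derivations_def by blast
  then show "\<exists>phi. h [E0] = 0 \<and> h [E1] = (e - b) * phi \<and> h [E2] = (f - c) * phi"
    by (intro exI[of _ phi]) simp
next
  assume "\<exists>phi. h [E0] = 0 \<and> h [E1] = (e - b) * phi \<and> h [E2] = (f - c) * phi"
  then obtain phi where p: "h [E0] = 0" "h [E1] = (e - b) * phi" "h [E2] = (f - c) * phi" by blast
  have "h = (\<lambda>w. (P_char e f w - P_char b c w) * phi)"
    apply (rule leib_unique[OF assms leib_inner])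
    subgoal for g by (cases g) (simp_all add: p)
    done
  then show "h \<in> inner_derivations (P_char b c) (P_char e f)"
    unfolding inner_derivations_def by blast
qed


lemma der_iff:
  assumes "b * c = x" "e * f = x"
  shows "d \<in> derivations (J_relators z x) (P_char b c) (P_char e f) \<longleftrightarrow>
    leib b c e f d \<and> (b - z*e) * d [E0] = 0 \<and> (f - z*c) * d [E0] = 0 \<and>
    (f - z^2*c) * d [E1] + (b - z^2*e) * d [E2] = x * d [E0]"
proof
  assume "d \<in> derivations (J_relators z x) (P_char b c) (P_char e f)"
  then have L: "leib b c e f d" and R: "\<forall>r\<in>set (J_relators z x). \<forall>a bb. (\<Sum>(t, w)\<leftarrow>r. t * d (a @ w @ bb)) = 0"
    unfolding derivations_def leib_def by auto
  have R1: "\<forall>a bb. (\<Sum>(t, w)\<leftarrow>[(1, [E0, E1]), (- z, [E1, E0])]. t * d (a @ w @ bb)) = 0"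
    using R unfolding J_relators_def by (simp del: append.simps append_Cons)
  have R2: "\<forall>a bb. (\<Sum>(t, w)\<leftarrow>[(1, [E2, E0]), (- z, [E0, E2])]. t * d (a @ w @ bb)) = 0"
    using R unfolding J_relators_def by (simp del: append.simps append_Cons)
  have R3: "\<forall>a bb. (\<Sum>(t, w)\<leftarrow>[(1, [E2, E1]), (- (z^2), [E1, E2]), (- x, [E0]), (- (x * (1 - z^2)), [])]. t * d (a @ w @ bb)) = 0"
    using R unfolding J_relators_def by (simp del: append.simps append_Cons)
  have r1: "d [E0,E1] - z * d [E1,E0] = 0" using R1[rule_format, of "[]" "[]"] by simp
  have r2: "d [E2,E0] - z * d [E0,E2] = 0" using R2[rule_format, of "[]" "[]"] by simp
  have r3: "d [E2,E1] - z^2 * d [E1,E2] - x * d [E0] - x*(1-z^2) * d [] = 0"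
    using R3[rule_format, of "[]" "[]"] by (simp add: algebra_simps)
  show "leib b c e f d \<and> (b - z*e) * d [E0] = 0 \<and> (f - z*c) * d [E0] = 0 \<and>
    (f - z^2*c) * d [E1] + (b - z^2*e) * d [E2] = x * d [E0]"
    using r1 r2 r3 L leib_two[OF L] leib_nil[OF L] by (simp add: algebra_simps)
next
  assume A: "leib b c e f d \<and> (b - z*e) * d [E0] = 0 \<and> (f - z*c) * d [E0] = 0 \<and>
    (f - z^2*c) * d [E1] + (b - z^2*e) * d [E2] = x * d [E0]"
  then have L: "leib b c e f d" by blast
  have "\<forall>r\<in>set (J_relators z x). \<forall>a bb. (\<Sum>(t, w)\<leftarrow>r. t * d (a @ w @ bb)) = 0"
  proof (intro ballI allI)
    fix r a bb assume rin: "r \<in> set (J_relators z x)"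
    note T = leib_three[OF L, of a _ bb]
    from rin consider "r = [(1, [E0, E1]), (- z, [E1, E0])]" | "r = [(1, [E2, E0]), (- z, [E0, E2])]"
      | "r = [(1, [E2, E1]), (- (z^2), [E1, E2]), (- x, [E0]), (- (x * (1 - z^2)), [])]"
      unfolding J_relators_def by auto
    then show "(\<Sum>(t, w)\<leftarrow>r. t * d (a @ w @ bb)) = 0"
    proof cases
      case 1
      have "(\<Sum>(t, w)\<leftarrow>r. t * d (a @ w @ bb)) = 1 * d (a @ [E0, E1] @ bb) + (- z * d (a @ [E1, E0] @ bb) + 0)"
        by (simp only: 1 list.map sum_list.Cons sum_list.Nil prod.case)
      also have "\<dots> = P_char e f a * P_char b c bb * ((b - z*e) * d [E0])"
        unfolding T using L by (simp add: leib_two leib_nil algebra_simps)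
      finally show ?thesis using A by simp
    next
      case 2
      have "(\<Sum>(t, w)\<leftarrow>r. t * d (a @ w @ bb)) = 1 * d (a @ [E2, E0] @ bb) + (- z * d (a @ [E0, E2] @ bb) + 0)"
        by (simp only: 2 list.map sum_list.Cons sum_list.Nil prod.case)
      also have "\<dots> = P_char e f a * P_char b c bb * ((f - z*c) * d [E0])"
        unfolding T using L by (simp add: leib_two leib_nil algebra_simps)
      finally show ?thesis using A by simp
    next
      case 3
      have "(\<Sum>(t, w)\<leftarrow>r. t * d (a @ w @ bb)) = 1 * d (a @ [E2, E1] @ bb) + (- (z^2) * d (a @ [E1, E2] @ bb)
          + (- x * d (a @ [E0] @ bb) + (- (x * (1 - z^2)) * d (a @ [] @ bb) + 0)))"
        by (simp only: 3 list.map sum_list.Cons sum_list.Nil prod.case)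
      also have "\<dots> = P_char e f a * P_char b c bb *
           ((f - z^2*c) * d [E1] + (b - z^2*e) * d [E2] - x * d [E0])
          + P_char e f a * d bb * (f * e - z^2 * e * f - x * (1 - z^2))
          + d a * P_char b c bb * (c * b - z^2 * b * c - x * (1 - z^2))"
        unfolding T using L by (simp add: leib_two leib_nil algebra_simps)
      finally have S: "(\<Sum>(t, w)\<leftarrow>r. t * d (a @ w @ bb)) = P_char e f a * P_char b c bb *
           ((f - z^2*c) * d [E1] + (b - z^2*e) * d [E2] - x * d [E0])
          + P_char e f a * d bb * (f * e - z^2 * e * f - x * (1 - z^2))
          + d a * P_char b c bb * (c * b - z^2 * b * c - x * (1 - z^2))" .
      have Q1: "(f - z^2*c) * d [E1] + (b - z^2*e) * d [E2] - x * d [E0] = 0" using A by simp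
      have Q2: "f * e - z^2 * e * f - x * (1 - z^2) = 0" unfolding assms(2)[symmetric] by (simp add: algebra_simps)
      have Q3: "c * b - z^2 * b * c - x * (1 - z^2) = 0" unfolding assms(1)[symmetric] by (simp add: algebra_simps)
      show ?thesis unfolding S Q1 Q2 Q3 by simp
    qed
  qed
  then show "d \<in> derivations (J_relators z x) (P_char b c) (P_char e f)"
    using L unfolding derivations_def leib_def by auto
qed


lemma inner_sing: "h \<in> inner_derivations (P_char b c) (P_char e f) \<Longrightarrow>
     (\<exists>phi. h [E0] = 0 \<and> h [E1] = (e - b) * phi \<and> h [E2] = (f - c) * phi)"
  unfolding inner_derivations_def by (auto intro!: exI)

lemma qdim0: assumes "\<forall>d\<in>D. d \<in> I" shows "quotient_dim D I 0"
  unfolding quotient_dim_def using assms by (intro exI[of _ "[]"]) simp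

lemma qdim1:
  assumes "B0 \<in> D" "\<And>k. (\<lambda>w. k * B0 w) \<in> I \<Longrightarrow> k = 0" "\<And>d. d \<in> D \<Longrightarrow> \<exists>k. (\<lambda>w. d w - k * B0 w) \<in> I"
  shows "quotient_dim D I 1"
  unfolding quotient_dim_def
proof (intro exI[of _ "[B0]"] conjI allI impI ballI)
  show "length [B0] = 1" "set [B0] \<subseteq> D" using assms(1) by auto
next
  fix cs :: "'a list" and i :: nat assume "length cs = 1" "(\<lambda>w. \<Sum>i<1. cs ! i * ([B0] ! i) w) \<in> I" "i < 1"
  then show "cs ! i = 0" using assms(2)[of "cs ! 0"] by simp
next
  fix d assume "d \<in> D"
  then obtain k where "(\<lambda>w. d w - k * B0 w) \<in> I" using assms(3) by blast
  then show "\<exists>cs. length cs = 1 \<and> (\<lambda>w. d w - (\<Sum>i<1. cs ! i * ([B0] ! i) w)) \<in> I"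
    by (intro exI[of _ "[k]"]) simp
qed

theorem proposition6p1:
  fixes K :: "'a::field set" and n :: nat and z x b c e f :: 'a
  assumes "is_subfield K"
    and "z \<in> K" and "primitive_root_of_unity n z" and "z ^ 2 \<noteq> 1"
    and "x \<in> K" and "x \<noteq> 0"
    and "b * c = x" and "e * f = x"
  shows "Ext1_P_dim z x b c e f
           (if (b = z * e \<and> f = z * c) \<or> (b = z^2 * e \<and> f = z^2 * c) \<or> (b = e \<and> c = f)
            then 1 else 0)"
proof -
  have bc: "b * c = x" and ef: "e * f = x" using assms by auto
  have z0: "z \<noteq> 0" using assms(3) unfolding primitive_root_of_unity_def by (auto simp: zero_power)
  have z1: "z \<noteq> 1" using assms(4) by auto
  have zm1: "z \<noteq> -1" using assms(4) by auto
  have nz: "b \<noteq> 0" "c \<noteq> 0" "e \<noteq> 0" "f \<noteq> 0" using assms(6) bc ef by auto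
  have z2: "1 - z^2 \<noteq> 0" "z^2 - 1 \<noteq> 0" using assms(4) by auto
  have z1': "1 - z \<noteq> 0" "z - 1 \<noteq> 0" using z1 by auto
  define D where "D = derivations (J_relators z x) (P_char b c) (P_char e f)"
  define I where "I = inner_derivations (P_char b c) (P_char e f)"
  note DI = der_iff[OF bc ef, of _ z, folded D_def]
  note II = inner_iff[of b c e f, folded I_def]
  note IS = inner_sing[of _ b c e f, folded I_def]
  have main: "quotient_dim D I
           (if (b = z * e \<and> f = z * c) \<or> (b = z^2 * e \<and> f = z^2 * c) \<or> (b = e \<and> c = f)
            then 1 else 0)"
  proof (cases "b = z * e \<and> f = z * c")
    case True
    then have hb: "b = z * e" and hf: "f = z * c" by auto
    define B0 where "B0 = Dt b c e f (case_gen (z*(1-z)*c) x 0)"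
    have LB: "leib b c e f B0" unfolding B0_def by (rule leib_Dt)
    have B0v: "B0 [E0] = z*(1-z)*c" "B0 [E1] = x" "B0 [E2] = 0" unfolding B0_def by simp_all
    have "quotient_dim D I 1"
    proof (rule qdim1)
      show "B0 \<in> D" unfolding DI using LB by (simp add: B0v hb hf power2_eq_square algebra_simps)
    next
      fix k assume "(\<lambda>w. k * B0 w) \<in> I"
      from IS[OF this] have "k * (z*(1-z)*c) = 0" using B0v by simp
      then show "k = 0" using z0 z1' nz by simp
    next
      fix d assume "d \<in> D"
      then have L: "leib b c e f d" and eq: "(f - z^2*c) * d [E1] + (b - z^2*e) * d [E2] = x * d [E0]"
        unfolding DI by auto
      have eq': "z*(1-z)*(c * d [E1] + e * d [E2]) = x * d [E0]"
        using eq unfolding hb hf by (simp add: power2_eq_square algebra_simps)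
      define k where "k = d [E0] / (z*(1-z)*c)"
      define phi where "phi = d [E2] / ((z - 1) * c)"
      have "(\<lambda>w. d w - k * B0 w) \<in> I"
      proof (rule II[THEN iffD2, OF leib_lin[OF L LB]], intro exI[of _ phi] conjI)
        show "d [E0] - k * B0 [E0] = 0" using B0v z0 z1' nz unfolding k_def by simp
        show "d [E2] - k * B0 [E2] = (f - c) * phi" using B0v z0 z1' nz unfolding phi_def hf
          by (simp add: field_simps)
        have "k * x = (x * d [E0]) / (z*(1-z)*c)" unfolding k_def by (simp add: ac_simps)
        also have "\<dots> = (z*(1-z)*(c * d [E1] + e * d [E2])) / (z*(1-z)*c)" using eq' by simp
        also have "\<dots> = d [E1] + e * d [E2] / c" using z0 z1' nz by (simp add: field_simps)
        finally have "k * x = d [E1] + e * d [E2] / c" .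
        then have A1: "d [E1] - k * B0 [E1] = - (e * d [E2] / c)" using B0v by simp
        have A2: "(e - z * e) * (d [E2] / ((z - 1) * c)) = - (e * d [E2] / c)"
          using z1' nz by (simp add: field_simps)
        show "d [E1] - k * B0 [E1] = (e - b) * phi" unfolding A1 phi_def hb A2 ..
      qed
      then show "\<exists>k. (\<lambda>w. d w - k * B0 w) \<in> I" by blast
    qed
    then show ?thesis using True by simp
  next
    case F1: False
    show ?thesis
    proof (cases "b = z^2 * e \<and> f = z^2 * c")
      case True
      then have hb: "b = z^2 * e" and hf: "f = z^2 * c" by auto
      define B0 where "B0 = Dt b c e f (case_gen 0 1 0)"
      have LB: "leib b c e f B0" unfolding B0_def by (rule leib_Dt)
      have B0v: "B0 [E0] = 0" "B0 [E1] = 1" "B0 [E2] = 0" unfolding B0_def by simp_all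
      have "quotient_dim D I 1"
      proof (rule qdim1)
        show "B0 \<in> D" unfolding DI using LB by (simp add: B0v hb hf power2_eq_square algebra_simps)
      next
        fix k assume "(\<lambda>w. k * B0 w) \<in> I"
        from IS[OF this] obtain phi where "k = (e - b) * phi" "0 = (f - c) * phi" using B0v by auto
        then show "k = 0" using z2 nz unfolding hb hf by (auto simp: algebra_simps)
      next
        fix d assume "d \<in> D"
        then have L: "leib b c e f d" and eq0: "(b - z*e) * d [E0] = 0"
          unfolding DI by auto
        have "b - z*e \<noteq> 0" unfolding hb using z0 z1 nz by (simp add: power2_eq_square)
        then have d0: "d [E0] = 0" using eq0 by simp
        define phi where "phi = d [E2] / ((z^2 - 1) * c)"
        define k where "k = d [E1] - (1 - z^2) * e * phi"
        have "(\<lambda>w. d w - k * B0 w) \<in> I"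
        proof (rule II[THEN iffD2, OF leib_lin[OF L LB]], intro exI[of _ phi] conjI)
          show "d [E0] - k * B0 [E0] = 0" using B0v d0 by simp
          show "d [E2] - k * B0 [E2] = (f - c) * phi" using B0v z2 nz unfolding phi_def hf
            by (simp add: field_simps)
          show "d [E1] - k * B0 [E1] = (e - b) * phi" using B0v unfolding k_def hb
            by (simp add: algebra_simps)
        qed
        then show "\<exists>k. (\<lambda>w. d w - k * B0 w) \<in> I" by blast
      qed
      then show ?thesis using True by simp
    next
      case F2: False
      show ?thesis
      proof (cases "b = e \<and> c = f")
        case True
        then have hb: "b = e" and hf: "f = c" by auto
        define B0 where "B0 = Dt b c e f (case_gen 0 e (- c))"
        have LB: "leib b c e f B0" unfolding B0_def by (rule leib_Dt)
        have B0v: "B0 [E0] = 0" "B0 [E1] = e" "B0 [E2] = - c" unfolding B0_def by simp_all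
        have "quotient_dim D I 1"
        proof (rule qdim1)
          show "B0 \<in> D" unfolding DI using LB by (simp add: B0v hb hf power2_eq_square algebra_simps)
        next
          fix k assume "(\<lambda>w. k * B0 w) \<in> I"
          from IS[OF this] obtain phi where "k * e = (e - b) * phi" using B0v by auto
          then show "k = 0" using nz unfolding hb by auto
        next
          fix d assume "d \<in> D"
          then have L: "leib b c e f d" and eq0: "(b - z*e) * d [E0] = 0"
            and eq: "(f - z^2*c) * d [E1] + (b - z^2*e) * d [E2] = x * d [E0]"
            unfolding DI by auto
          have "b - z*e \<noteq> 0" unfolding hb using z1' nz by (metis mult_cancel_right1 right_minus_eq)
          then have d0: "d [E0] = 0" using eq0 by simp
          have eq2: "(c - z^2*c) * d [E1] + (e - z^2*e) * d [E2] = 0" using eq d0 unfolding hb hf by simp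
          have "(1 - z^2) * (c * d [E1] + e * d [E2]) = (c - z^2*c) * d [E1] + (e - z^2*e) * d [E2]"
            by (simp add: algebra_simps)
          then have "(1 - z^2) * (c * d [E1] + e * d [E2]) = 0" using eq2 by simp
          then have eq': "c * d [E1] + e * d [E2] = 0" using z2 by simp
          define k where "k = d [E1] / e"
          have "(\<lambda>w. d w - k * B0 w) \<in> I"
          proof (rule II[THEN iffD2, OF leib_lin[OF L LB]], intro exI[of _ 0] conjI)
            show "d [E0] - k * B0 [E0] = 0" using B0v d0 by simp
            show "d [E1] - k * B0 [E1] = (e - b) * 0" using B0v nz unfolding k_def by simp
            have "e * d [E2] = - (c * d [E1])" using eq' by (simp add: eq_neg_iff_add_eq_0 add.commute)
            then have "d [E2] = - c * d [E1] / e" using nz by (simp add: field_simps)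
            then show "d [E2] - k * B0 [E2] = (f - c) * 0" using B0v nz unfolding k_def
              by (simp add: field_simps)
          qed
          then show "\<exists>k. (\<lambda>w. d w - k * B0 w) \<in> I" by blast
        qed
        then show ?thesis using True by simp
      next
        case F3: False
        have "quotient_dim D I 0"
        proof (rule qdim0, intro ballI)
          fix d assume "d \<in> D"
          then have L: "leib b c e f d" and eq1: "(b - z*e) * d [E0] = 0" and eq2: "(f - z*c) * d [E0] = 0"
            and eq: "(f - z^2*c) * d [E1] + (b - z^2*e) * d [E2] = x * d [E0]"
            unfolding DI by auto
          have d0: "d [E0] = 0" using eq1 eq2 F1 by auto
          define \<alpha> where "\<alpha> = f - z^2*c"
          define \<beta> where "\<beta> = b - z^2*e"
          have ab: "\<alpha> \<noteq> 0 \<or> \<beta> \<noteq> 0" using F2 unfolding \<alpha>_def \<beta>_def by auto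
          have e1: "\<alpha> * d [E1] + \<beta> * d [E2] = 0" using eq d0 unfolding \<alpha>_def \<beta>_def by simp
          have e2: "\<alpha> * (e - b) + \<beta> * (f - c) = 0" unfolding \<alpha>_def \<beta>_def
          proof -
            have "(f - z\<^sup>2 * c) * (e - b) + (b - z\<^sup>2 * e) * (f - c) = e * f - b * c + z^2 * (b * c) - z^2 * (e * f)"
              by (simp add: algebra_simps)
            then show "(f - z\<^sup>2 * c) * (e - b) + (b - z\<^sup>2 * e) * (f - c) = 0" using bc ef by simp
          qed
          have det: "(e - b) * d [E2] = (f - c) * d [E1]"
          proof -
            have "\<alpha> * ((e - b) * d [E2] - (f - c) * d [E1]) = 0"
            proof -
              have "\<alpha> * ((e - b) * d [E2] - (f - c) * d [E1]) = d [E2] * (\<alpha> * (e - b) + \<beta> * (f - c)) - (f - c) * (\<alpha> * d [E1] + \<beta> * d [E2])"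
                by (simp add: algebra_simps)
              then show ?thesis using e1 e2 by simp
            qed
            moreover have "\<beta> * ((e - b) * d [E2] - (f - c) * d [E1]) = 0"
            proof -
              have "\<beta> * ((e - b) * d [E2] - (f - c) * d [E1]) = (e - b) * (\<alpha> * d [E1] + \<beta> * d [E2]) - d [E1] * (\<alpha> * (e - b) + \<beta> * (f - c))"
                by (simp add: algebra_simps)
              then show ?thesis using e1 e2 by simp
            qed
            ultimately show ?thesis using ab by auto
          qed
          have ne: "e - b \<noteq> 0 \<or> f - c \<noteq> 0" using F3 by auto
          show "d \<in> I"
          proof (rule II[THEN iffD2, OF L])
            show "\<exists>phi. d [E0] = 0 \<and> d [E1] = (e - b) * phi \<and> d [E2] = (f - c) * phi"
            proof (cases "e - b = 0")
              case True
              then have "f - c \<noteq> 0" using ne by auto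
              then show ?thesis using True det d0
                by (intro exI[of _ "d [E2] / (f - c)"]) (auto simp: field_simps)
            next
              case False
              then show ?thesis using det d0
                by (intro exI[of _ "d [E1] / (e - b)"]) (auto simp: field_simps)
            qed
          qed
        qed
        moreover have nc: "\<not> ((b = z*e \<and> f = z*c) \<or> (b = z^2*e \<and> f = z^2*c) \<or> (b = e \<and> c = f))"
          using F1 F2 F3 by blast
        ultimately show ?thesis by (simp only: nc if_False)
      qed
    qed
  qed
  then show ?thesis unfolding Ext1_P_dim_def D_def I_def .
qed

end
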